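(* Let $V$ be a ground model, $\kappa$ an infinite cardinal, $\mathbb{A}\in V$ a Boolean algebra, and let $\dot{\mathcal{U}}_n$ ($n\in\omega$), $\dot{\mathcal{U}}$ be $\mathbb{M}_\kappa$-names for ultrafilters on $\mathbb{A}$, with $\varphi_n=\varphi_{\dot{\mathcal{U}}_n}$ and $\varphi=\varphi_{\dot{\mathcal{U}}}$. If $(\varphi_n)$ converges uniformly to $\varphi$, then for all but finitely many $n$ there is a condition $p_n\in\mathbb{M}_\kappa\setminus\{0\}$ such that $p_n\Vdash\dot{\mathcal{U}}_n=\dot{\mathcal{U}}$.
   Context: $\mathbb{M}_\kappa$ is the measure algebra $Bor(2^\kappa)/\mathcal{N}_\kappa$ of the standard product measure $\lambda_\kappa$ on $2^\kappa$, used as a forcing notion (conditions are nonzero elements). For an $\mathbb{M}_\kappa$-name $\dot{\mathcal{U}}$ with $\Vdash$ "$\dot{\mathcal{U}}$ is an ultrafilter on $\mathbb{A}$", $\varphi_{\dot{\mathcal{U}}}\colon\mathbb{A}\to\mathbb{M}_\kappa$ is the homomorphism $\varphi_{\dot{\mathcal{U}}}(A)=\llbracket A\in\dot{\mathcal{U}}\rrbracket$. $(\varphi_n)$ converges uniformly to $\varphi$ if for every $\varepsilon>0$ there is $N$ with $\lambda_\kappa(\varphi_n(A)\triangle\varphi(A))<\varepsilon$ for all $n>N$ and all $A\in\mathbb{A}$. *)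

theory Defs
  imports "HOL-Probability.Probability"
begin

text \<open>The measure space (2^kappa, product sigma-algebra, standard product measure lambda_kappa),
  with kappa represented by an infinite index type 'k.  Elements of the measure algebra M_kappa
  are represented by measurable sets, identified modulo null sets.\<close>

definition cantor_measure :: "('k \<Rightarrow> bool) measure" where
  "cantor_measure = PiM UNIV (\<lambda>_. measure_pmf (bernoulli_pmf (1/2)))"

definition symdiff :: "'x set \<Rightarrow> 'x set \<Rightarrow> 'x set" where
  "symdiff X Y = (X - Y) \<union> (Y - X)"

definition null_set_of :: "'x measure \<Rightarrow> 'x set \<Rightarrow> bool" where
  "null_set_of M X \<longleftrightarrow> X \<in> sets M \<and> emeasure M X = 0"

definition meas_alg_hom :: "'x measure \<Rightarrow> ('a::boolean_algebra \<Rightarrow> 'x set) \<Rightarrow> bool" where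
  "meas_alg_hom M \<phi> \<longleftrightarrow>
     (\<forall>a. \<phi> a \<in> sets M) \<and>
     (\<forall>a b. null_set_of M (symdiff (\<phi> (inf a b)) (\<phi> a \<inter> \<phi> b))) \<and>
     (\<forall>a. null_set_of M (symdiff (\<phi> (- a)) (space M - \<phi> a)))"

definition unif_conv :: "'x measure \<Rightarrow> (nat \<Rightarrow> 'a \<Rightarrow> 'x set) \<Rightarrow> ('a \<Rightarrow> 'x set) \<Rightarrow> bool" where
  "unif_conv M \<phi>s \<phi> \<longleftrightarrow>
     (\<forall>\<epsilon>>0. \<exists>N. \<forall>n>N. \<forall>a. measure M (symdiff (\<phi>s n a) (\<phi> a)) < \<epsilon>)"

text \<open>p forces U_n = U, where phi_n, phi are the associated homomorphisms:
  p is a nonzero condition below [[a \<in> U_n \<longleftrightarrow> a \<in> U]] for every a,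
  i.e. p \<inter> (phi_n a symdiff phi a) is null for every a.\<close>
definition forces_equal :: "'x measure \<Rightarrow> 'x set \<Rightarrow> ('a \<Rightarrow> 'x set) \<Rightarrow> ('a \<Rightarrow> 'x set) \<Rightarrow> bool" where
  "forces_equal M p \<psi> \<phi> \<longleftrightarrow> (\<forall>a. null_set_of M (p \<inter> symdiff (\<psi> a) (\<phi> a)))"

end

theory Submission
  imports Defs
begin

abbreviation "CM \<equiv> (cantor_measure :: ('k \<Rightarrow> bool) measure)"

lemma cm_prob: "prob_space CM"
  unfolding cantor_measure_def
  by (intro prob_space_PiM prob_space_measure_pmf)

lemma cm_space: "space CM = UNIV"
  unfolding cantor_measure_def by (simp add: space_PiM PiE_UNIV_domain)

lemma null_AE:
  assumes "null_set_of CM (symdiff A B)"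
  shows "AE x in CM. (x \<in> A \<longleftrightarrow> x \<in> B)"
proof -
  have "AE x in CM. x \<notin> symdiff A B"
    using assms by (intro AE_not_in) (auto simp: null_set_of_def)
  then show ?thesis by (rule AE_mp) (auto simp: symdiff_def)
qed

lemma hom_inf:
  assumes "meas_alg_hom CM \<psi>"
  shows "AE x in CM. (x \<in> \<psi> (inf a b) \<longleftrightarrow> x \<in> \<psi> a \<and> x \<in> \<psi> b)"
  using null_AE[of "\<psi> (inf a b)" "\<psi> a \<inter> \<psi> b"] assms
  unfolding meas_alg_hom_def by auto

lemma hom_compl:
  assumes "meas_alg_hom CM \<psi>"
  shows "AE x in CM. (x \<in> \<psi> (- a) \<longleftrightarrow> x \<notin> \<psi> a)"
  using null_AE[of "\<psi> (- a)" "space CM - \<psi> a"] assms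
  unfolding meas_alg_hom_def by (auto simp: cm_space)

definition xr :: "'a::boolean_algebra \<Rightarrow> 'a \<Rightarrow> 'a" where
  "xr a b = - (inf (- (inf a (- b))) (- (inf (- a) b)))"

lemma hom_xr:
  assumes h: "meas_alg_hom CM \<psi>"
  shows "AE x in CM. (x \<in> \<psi> (xr a b) \<longleftrightarrow> ((x \<in> \<psi> a) \<noteq> (x \<in> \<psi> b)))"
proof -
  have 1: "AE x in CM. (x \<in> \<psi> (xr a b) \<longleftrightarrow> x \<notin> \<psi> (inf (- (inf a (- b))) (- (inf (- a) b))))"
    unfolding xr_def by (rule hom_compl[OF h])
  have 2: "AE x in CM. (x \<in> \<psi> (inf (- (inf a (- b))) (- (inf (- a) b))) \<longleftrightarrow>
      x \<in> \<psi> (- (inf a (- b))) \<and> x \<in> \<psi> (- (inf (- a) b)))"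
    by (rule hom_inf[OF h])
  have 3: "AE x in CM. (x \<in> \<psi> (- (inf a (- b))) \<longleftrightarrow> x \<notin> \<psi> (inf a (- b)))"
    by (rule hom_compl[OF h])
  have 4: "AE x in CM. (x \<in> \<psi> (- (inf (- a) b)) \<longleftrightarrow> x \<notin> \<psi> (inf (- a) b))"
    by (rule hom_compl[OF h])
  have 5: "AE x in CM. (x \<in> \<psi> (inf a (- b)) \<longleftrightarrow> x \<in> \<psi> a \<and> x \<in> \<psi> (- b))"
    by (rule hom_inf[OF h])
  have 6: "AE x in CM. (x \<in> \<psi> (inf (- a) b) \<longleftrightarrow> x \<in> \<psi> (- a) \<and> x \<in> \<psi> b)"
    by (rule hom_inf[OF h])
  have 7: "AE x in CM. (x \<in> \<psi> (- a) \<longleftrightarrow> x \<notin> \<psi> a)"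
    by (rule hom_compl[OF h])
  have 8: "AE x in CM. (x \<in> \<psi> (- b) \<longleftrightarrow> x \<notin> \<psi> b)"
    by (rule hom_compl[OF h])
  show ?thesis using 1 2 3 4 5 6 7 8 by eventually_elim blast
qed

lemma hom_xr_self:
  assumes h: "meas_alg_hom CM \<psi>"
  shows "AE x in CM. x \<notin> \<psi> (xr a a)"
  using hom_xr[OF h, of a a] by eventually_elim auto


definition EE :: "('a \<Rightarrow> 'x set) \<Rightarrow> ('a \<Rightarrow> 'x set) \<Rightarrow> 'a \<Rightarrow> 'x set" where
  "EE \<psi> \<phi> a = symdiff (\<psi> a) (\<phi> a)"

lemma EE_sets: "meas_alg_hom CM \<psi> \<Longrightarrow> meas_alg_hom CM \<phi> \<Longrightarrow> EE \<psi> \<phi> a \<in> sets CM"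
  unfolding EE_def symdiff_def meas_alg_hom_def by auto

lemma EE_xr:
  assumes h1: "meas_alg_hom CM \<psi>" and h2: "meas_alg_hom CM \<phi>"
  shows "AE x in CM. (x \<in> EE \<psi> \<phi> (xr a b) \<longleftrightarrow> ((x \<in> EE \<psi> \<phi> a) \<noteq> (x \<in> EE \<psi> \<phi> b)))"
  using hom_xr[OF h1, of a b] hom_xr[OF h2, of a b]
  by eventually_elim (auto simp: EE_def symdiff_def)

lemma EE_xr_self:
  assumes h1: "meas_alg_hom CM \<psi>" and h2: "meas_alg_hom CM \<phi>"
  shows "AE x in CM. x \<notin> EE \<psi> \<phi> (xr a a)"
  using EE_xr[OF h1 h2, of a a] by eventually_elim auto

lemma key:
  fixes \<psi> \<phi> :: "'a::boolean_algebra \<Rightarrow> ('k \<Rightarrow> bool) set"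
  assumes h1: "meas_alg_hom CM \<psi>" and h2: "meas_alg_hom CM \<phi>" and fin: "finite F"
  shows "\<forall>X \<in> sets CM. \<exists>c. measure CM (symdiff X (EE \<psi> \<phi> c)) \<ge>
           measure CM (X - (\<Union>a\<in>F. EE \<psi> \<phi> a)) + measure CM (\<Union>a\<in>F. EE \<psi> \<phi> a) / 2"
  using fin
proof (induction F rule: finite_induct)
  case empty
  interpret prob_space CM by (rule cm_prob)
  show ?case
  proof
    fix X :: "('k \<Rightarrow> bool) set" assume X: "X \<in> sets CM"
    have "measure CM (symdiff X (EE \<psi> \<phi> (xr undefined undefined))) = measure CM X"
      using EE_xr_self[OF h1 h2, of undefined] X EE_sets[OF h1 h2]
      by (intro measure_eq_AE) (auto simp: symdiff_def elim!: AE_mp)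
    then show "\<exists>c. measure CM (symdiff X (EE \<psi> \<phi> c)) \<ge>
           measure CM (X - (\<Union>a\<in>{}. EE \<psi> \<phi> a)) + measure CM (\<Union>a\<in>{}. EE \<psi> \<phi> a) / 2"
      by (intro exI[of _ "xr undefined undefined"]) simp
  qed
next
  case (insert a F)
  interpret prob_space CM by (rule cm_prob)
  define E where "E = EE \<psi> \<phi>"
  define U where "U = (\<Union>a\<in>F. E a)"
  have Es: "E b \<in> sets CM" for b using EE_sets[OF h1 h2] by (simp add: E_def)
  have Us: "U \<in> sets CM" unfolding U_def using Es insert.hyps(1) by auto
  have IH: "\<forall>X \<in> sets CM. \<exists>c. measure CM (symdiff X (E c)) \<ge> measure CM (X - U) + measure CM U / 2"
    using insert.IH by (simp add: E_def U_def)
  show ?case unfolding E_def[symmetric]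
  proof
    fix X :: "('k \<Rightarrow> bool) set" assume X: "X \<in> sets CM"
    have U': "(\<Union>a\<in>insert a F. E a) = E a \<union> U" by (simp add: U_def)
    obtain c1 where c1: "measure CM (symdiff X (E c1)) \<ge> measure CM (X - U) + measure CM U / 2"
      using IH X by blast
    have XE: "symdiff X (E a) \<in> sets CM" using X Es by (auto simp: symdiff_def)
    obtain c2 where c2: "measure CM (symdiff (symdiff X (E a)) (E c2)) \<ge>
        measure CM (symdiff X (E a) - U) + measure CM U / 2"
      using IH XE by blast
    have eq: "measure CM (symdiff (symdiff X (E a)) (E c2)) = measure CM (symdiff X (E (xr a c2)))"
      using EE_xr[OF h1 h2, of a c2] X Es
      by (intro measure_eq_AE) (auto simp: symdiff_def E_def elim!: AE_mp)
    have m1: "measure CM (X - U) = measure CM (X - (E a \<union> U)) + measure CM (X \<inter> E a - U)"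
      using X Es Us by (subst finite_measure_Union[symmetric]) (auto intro!: arg_cong[where f="measure CM"])
    have m2: "measure CM (symdiff X (E a) - U) = measure CM (X - (E a \<union> U)) + measure CM (E a - U - X)"
      using X Es Us by (subst finite_measure_Union[symmetric]) (auto simp: symdiff_def intro!: arg_cong[where f="measure CM"])
    have m3: "measure CM (E a \<union> U) = measure CM U + measure CM (E a - U)"
      using X Es Us by (subst finite_measure_Union[symmetric]) (auto intro!: arg_cong[where f="measure CM"])
    have m4: "measure CM (E a - U) = measure CM (X \<inter> E a - U) + measure CM (E a - U - X)"
      using X Es Us by (subst finite_measure_Union[symmetric]) (auto intro!: arg_cong[where f="measure CM"])
    have "max (measure CM (symdiff X (E c1))) (measure CM (symdiff X (E (xr a c2)))) \<ge>
        measure CM (X - (E a \<union> U)) + measure CM (E a \<union> U) / 2"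
      using c1 c2 eq m1 m2 m3 m4 by linarith
    then show "\<exists>c. measure CM (symdiff X (E c)) \<ge>
        measure CM (X - (\<Union>a\<in>insert a F. E a)) + measure CM (\<Union>a\<in>insert a F. E a) / 2"
      unfolding U' by (cases "measure CM (symdiff X (E c1)) \<le> measure CM (symdiff X (E (xr a c2)))")
        (auto simp: max_def)
  qed
qed


lemma small_union:
  fixes \<psi> \<phi> :: "'a::boolean_algebra \<Rightarrow> ('k \<Rightarrow> bool) set"
  assumes h1: "meas_alg_hom CM \<psi>" and h2: "meas_alg_hom CM \<phi>" and fin: "finite F"
    and sm: "\<forall>a. measure CM (EE \<psi> \<phi> a) < 1/4"
  shows "measure CM (\<Union>a\<in>F. EE \<psi> \<phi> a) < 1/2"
proof -
  obtain c where "measure CM (symdiff {} (EE \<psi> \<phi> c)) \<ge>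
           measure CM ({} - (\<Union>a\<in>F. EE \<psi> \<phi> a)) + measure CM (\<Union>a\<in>F. EE \<psi> \<phi> a) / 2"
    using key[OF h1 h2 fin] by blast
  then have "measure CM (EE \<psi> \<phi> c) \<ge> measure CM (\<Union>a\<in>F. EE \<psi> \<phi> a) / 2"
    by (simp add: symdiff_def)
  moreover have "measure CM (EE \<psi> \<phi> c) < 1/4" using sm by blast
  ultimately show ?thesis by linarith
qed

lemma exists_p:
  fixes \<psi> \<phi> :: "'a::boolean_algebra \<Rightarrow> ('k \<Rightarrow> bool) set"
  assumes h1: "meas_alg_hom CM \<psi>" and h2: "meas_alg_hom CM \<phi>"
    and sm: "\<forall>a. measure CM (EE \<psi> \<phi> a) < 1/4"
  shows "\<exists>p \<in> sets CM. emeasure CM p \<noteq> 0 \<and> forces_equal CM p \<psi> \<phi>"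
proof -
  interpret prob_space CM by (rule cm_prob)
  define E where "E = EE \<psi> \<phi>"
  define U where "U F = (\<Union>a\<in>F. E a)" for F
  have Es: "E b \<in> sets CM" for b using EE_sets[OF h1 h2] by (simp add: E_def)
  have Us: "finite F \<Longrightarrow> U F \<in> sets CM" for F unfolding U_def using Es by auto
  have Usm: "finite F \<Longrightarrow> measure CM (U F) < 1/2" for F
    using small_union[OF h1 h2 _ sm] by (simp add: U_def E_def)
  define s where "s = (SUP F\<in>{F. finite F}. measure CM (U F))"
  have ne: "{F. finite F} \<noteq> {}" by blast
  have bdd: "bdd_above ((\<lambda>F. measure CM (U F)) ` {F. finite F})"
    using Usm by (intro bdd_aboveI[of _ "1/2"]) (auto simp: less_imp_le)
  have upper: "finite F \<Longrightarrow> measure CM (U F) \<le> s" for F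
    unfolding s_def using bdd by (intro cSUP_upper) auto
  have "\<exists>F. finite F \<and> s - 1 / Suc k < measure CM (U F)" for k :: nat
  proof -
    have "s - 1 / Suc k < s" by simp
    then show ?thesis unfolding s_def[of ] using less_cSUP_iff[OF ne bdd] by (auto simp: s_def)
  qed
  then obtain Fs where Fs: "\<And>k. finite (Fs k)" "\<And>k. s - 1 / Suc k < measure CM (U (Fs k))"
    by metis
  define S where "S = (\<Union>k. U (Fs k))"
  define T where "T K = U (\<Union>k\<le>K. Fs k)" for K
  have TS: "(\<Union>K. T K) = S" unfolding T_def S_def U_def by auto
  have Tinc: "incseq T" unfolding T_def U_def incseq_def by (auto 0 4 intro: order_trans)
  have Tfin: "finite (\<Union>k\<le>K. Fs k)" for K using Fs(1) by auto
  have Tsets: "range T \<subseteq> sets CM" using Us[OF Tfin] by (auto simp: T_def)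
  have "(\<lambda>K. measure CM (T K)) \<longlonglongrightarrow> measure CM S"
    using finite_Lim_measure_incseq[OF Tsets Tinc] TS by simp
  moreover have "measure CM (T K) \<le> 1/2" for K
    using Usm[OF Tfin, of K] unfolding T_def by linarith
  ultimately have mS: "measure CM S \<le> 1/2"
    by (intro LIMSEQ_le_const2) auto
  have Ss: "S \<in> sets CM" unfolding S_def using Us[OF Fs(1)] by auto
  define p where "p = space CM - S"
  have ps: "p \<in> sets CM" unfolding p_def using Ss by auto
  have "measure CM p = 1 - measure CM S" unfolding p_def using Ss by (rule prob_compl)
  with mS have mp: "measure CM p > 0" by simp
  have "emeasure CM p \<noteq> 0" using mp by (simp add: emeasure_eq_measure)
  moreover have "forces_equal CM p \<psi> \<phi>"
    unfolding forces_equal_def null_set_of_def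
  proof
    fix a
    have pE: "p \<inter> symdiff (\<psi> a) (\<phi> a) = E a - S"
      using sets.sets_into_space[OF Es[of a]] by (auto simp: p_def E_def EE_def cm_space)
    have EaS: "E a - S \<in> sets CM" using Es Ss by auto
    have "measure CM (E a - S) = 0"
    proof (rule ccontr)
      assume "measure CM (E a - S) \<noteq> 0"
      then have d: "measure CM (E a - S) > 0" using measure_nonneg[of CM "E a - S"] by linarith
      obtain k :: nat where k: "1 / Suc k < measure CM (E a - S)"
        using reals_Archimedean[OF d] by (auto simp: divide_inverse)
      have fin': "finite (insert a (Fs k))" using Fs(1) by simp
      have sub: "U (Fs k) \<subseteq> S" unfolding S_def by auto
      have "U (insert a (Fs k)) = U (Fs k) \<union> (E a - S) \<union> (E a \<inter> S)" using sub
        by (auto simp: U_def)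
      then have "measure CM (U (insert a (Fs k))) \<ge> measure CM (U (Fs k) \<union> (E a - S))"
        using Us[OF fin'] by (intro finite_measure_mono) auto
      moreover have "measure CM (U (Fs k) \<union> (E a - S)) = measure CM (U (Fs k)) + measure CM (E a - S)"
        using sub Us[OF Fs(1)] EaS by (intro finite_measure_Union) auto
      ultimately have "measure CM (U (insert a (Fs k))) > s"
        using Fs(2)[of k] k by linarith
      with upper[OF fin'] show False by linarith
    qed
    then show "p \<inter> symdiff (\<psi> a) (\<phi> a) \<in> sets CM \<and> emeasure CM (p \<inter> symdiff (\<psi> a) (\<phi> a)) = 0"
      using pE EaS by (simp add: emeasure_eq_measure)
  qed
  ultimately show ?thesis using ps by blast
qed

theorem theorem7p5:
  fixes \<phi>s :: "nat \<Rightarrow> 'a::boolean_algebra \<Rightarrow> ('k \<Rightarrow> bool) set"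
    and \<phi> :: "'a \<Rightarrow> ('k \<Rightarrow> bool) set"
  assumes "infinite (UNIV :: 'k set)"
    and "\<And>n. meas_alg_hom cantor_measure (\<phi>s n)"
    and "meas_alg_hom cantor_measure \<phi>"
    and "unif_conv cantor_measure \<phi>s \<phi>"
  shows "\<forall>\<^sub>F n in sequentially. \<exists>p \<in> sets cantor_measure.
           emeasure cantor_measure p \<noteq> 0 \<and> forces_equal cantor_measure p (\<phi>s n) \<phi>"
proof -
  obtain N where N: "\<forall>n>N. \<forall>a. measure cantor_measure (symdiff (\<phi>s n a) (\<phi> a)) < 1/4"
    using assms(4) unfolding unif_conv_def by (meson zero_less_divide_1_iff zero_less_numeral)
  show ?thesis unfolding eventually_sequentially
  proof (intro exI[of _ "Suc N"] allI impI)
    fix n assume "Suc N \<le> n"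
    then have "\<forall>a. measure cantor_measure (EE (\<phi>s n) \<phi> a) < 1/4"
      using N by (simp add: EE_def)
    then show "\<exists>p \<in> sets cantor_measure.
           emeasure cantor_measure p \<noteq> 0 \<and> forces_equal cantor_measure p (\<phi>s n) \<phi>"
      by (rule exists_p[OF assms(2) assms(3)])
  qed
qed

end
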